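(* Let $p$ be a prime number, $\nu\ge 0$ an integer, and $N\ge 1$ an integer. Let $m,n$ be positive even integers with $m\ge n$, $m\equiv n\pmod{(p-1)p^{\nu}}$ and $m,n\not\equiv 0\pmod{p-1}$. If $$\mathrm{ord}_p(N-1)\ \ge\ \nu+1+\mathrm{ord}_p\Big(\prod_{k=0}^{m}(1+k)!\Big)+\max\{\mathrm{ord}_p(m),\mathrm{ord}_p(n)\},$$ then $$(1-p^{m-1})\frac{B_{N,m}}{m}\equiv(1-p^{n-1})\frac{B_{N,n}}{n}\pmod{p^{\nu+1}}.$$
   Context: For a positive integer $N$, the hypergeometric Bernoulli numbers $B_{N,n}$ are defined by $\frac{x^N/N!}{e^x-\sum_{n=0}^{N-1}x^n/n!}=\sum_{n\ge0} B_{N,n}\frac{x^n}{n!}$. $\mathrm{ord}_p$ denotes the $p$-adic valuation on $\mathbb{Q}$ (with $\mathrm{ord}_p(0)=\infty$); for rationals $a,b$, $a\equiv b\pmod{p^s}$ means $\mathrm{ord}_p(a-b)\ge s$. *)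

theory Defs
  imports "HOL-Computational_Algebra.Computational_Algebra" "HOL-Number_Theory.Number_Theory"
begin

definition hyp_bernoulli :: "nat \<Rightarrow> nat \<Rightarrow> rat" where
  "hyp_bernoulli N n = fact n * fps_nth
     ((fps_const (1 / fact N) * fps_X ^ N) /
      (fps_exp 1 - (\<Sum>k<N. fps_const (1 / fact k) * fps_X ^ k))) n"

text \<open>p-adic valuation of a nonzero rational (meaningless at 0; zero is handled separately).\<close>
definition qord :: "nat \<Rightarrow> rat \<Rightarrow> int" where
  "qord p x = (case quotient_of x of (a, b) \<Rightarrow>
      int (multiplicity (int p) a) - int (multiplicity (int p) b))"

definition qcong :: "nat \<Rightarrow> nat \<Rightarrow> rat \<Rightarrow> rat \<Rightarrow> bool" where
  "qcong p s a b \<longleftrightarrow> a - b = 0 \<or> qord p (a - b) \<ge> int s"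

end

theory Submission
  imports Defs
begin


definition pint :: "nat \<Rightarrow> int \<Rightarrow> rat \<Rightarrow> bool" where
  "pint p e x \<longleftrightarrow> (\<exists>a b. b \<noteq> 0 \<and> \<not> int p dvd b \<and> x = of_int a / of_int b * power_int (of_nat p) e)"

lemma pint_zero: "prime p \<Longrightarrow> pint p e 0"
  unfolding pint_def by (rule exI[of _ 0], rule exI[of _ 1]) (auto simp: prime_nat_iff)

lemma pint_mono:
  assumes "prime p" "pint p e x" "e' \<le> e" shows "pint p e' x"
proof -
  from assms(2) obtain a b where ab: "b \<noteq> 0" "\<not> int p dvd b" "x = of_int a / of_int b * power_int (of_nat p) e"
    unfolding pint_def by blast
  have p0: "(of_nat p :: rat) \<noteq> 0" using assms(1) by (simp add: prime_gt_0_nat)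
  have "power_int (of_nat p :: rat) e = power_int (of_nat p) (e - e') * power_int (of_nat p) e'"
    using p0 by (simp add: power_int_add[symmetric])
  also have "power_int (of_nat p :: rat) (e - e') = of_int (int p ^ nat (e - e'))"
    using assms(3) by (metis of_int_of_nat_eq of_int_power int_nat_eq le_iff_diff_le_0 nat_eq_iff2 power_int_of_nat diff_ge_0_iff_ge)
  finally have "x = of_int (a * int p ^ nat (e - e')) / of_int b * power_int (of_nat p) e'"
    using ab(3) by simp
  then show ?thesis unfolding pint_def using ab(1,2) by blast
qed

lemma pint_add:
  assumes "prime p" "pint p e x" "pint p e y" shows "pint p e (x + y)"
proof -
  from assms(2) obtain a b where ab: "b \<noteq> 0" "\<not> int p dvd b" "x = of_int a / of_int b * power_int (of_nat p) e"
    unfolding pint_def by blast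
  from assms(3) obtain c d where cd: "d \<noteq> 0" "\<not> int p dvd d" "y = of_int c / of_int d * power_int (of_nat p) e"
    unfolding pint_def by blast
  have "x + y = of_int (a * d + c * b) / of_int (b * d) * power_int (of_nat p) e"
    using ab cd by (simp add: field_simps)
  moreover have "\<not> int p dvd b * d" using ab(2) cd(2) assms(1)
    by (simp add: prime_dvd_mult_iff)
  ultimately show ?thesis unfolding pint_def using ab(1) cd(1) by (metis mult_eq_0_iff)
qed

lemma pint_uminus: "pint p e x \<Longrightarrow> pint p e (- x)"
  unfolding pint_def by (metis minus_divide_left minus_mult_left of_int_minus)

lemma pint_uminus_iff: "pint p e (- x) \<longleftrightarrow> pint p e x"
  using pint_uminus[of p e x] pint_uminus[of p e "-x"] by auto

lemma pint_diff:
  assumes "prime p" "pint p e x" "pint p e y" shows "pint p e (x - y)"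
  using pint_add[OF assms(1,2) pint_uminus[OF assms(3)]] by simp

lemma pint_sum:
  assumes "prime p" "\<And>i. i \<in> A \<Longrightarrow> pint p e (f i)" shows "pint p e (\<Sum>i\<in>A. f i)"
  using assms(2)
proof (induction A rule: infinite_finite_induct)
  case (infinite A) then show ?case by (simp add: pint_zero[OF assms(1)])
next
  case empty then show ?case by (simp add: pint_zero[OF assms(1)])
next
  case (insert x F) then show ?case by (simp add: pint_add[OF assms(1)])
qed

lemma pint_mult:
  assumes "prime p" "pint p e x" "pint p f y" shows "pint p (e + f) (x * y)"
proof -
  from assms(2) obtain a b where ab: "b \<noteq> 0" "\<not> int p dvd b" "x = of_int a / of_int b * power_int (of_nat p) e"
    unfolding pint_def by blast
  from assms(3) obtain c d where cd: "d \<noteq> 0" "\<not> int p dvd d" "y = of_int c / of_int d * power_int (of_nat p) f"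
    unfolding pint_def by blast
  have p0: "(of_nat p :: rat) \<noteq> 0" using assms(1) by (simp add: prime_gt_0_nat)
  have "x * y = of_int (a * c) / of_int (b * d) * power_int (of_nat p) (e + f)"
    using ab cd p0 by (simp add: power_int_add field_simps)
  moreover have "\<not> int p dvd b * d" using ab(2) cd(2) assms(1)
    by (simp add: prime_dvd_mult_iff)
  ultimately show ?thesis unfolding pint_def using ab(1) cd(1) by (metis mult_eq_0_iff)
qed

lemma pint_of_int: "prime p \<Longrightarrow> pint p 0 (of_int z)"
  unfolding pint_def by (rule exI[of _ z], rule exI[of _ 1]) (auto simp: prime_nat_iff)

lemma pint_of_nat: "prime p \<Longrightarrow> pint p 0 (of_nat z)"
  using pint_of_int[of p "int z"] by simp

lemma pint_dvd_int:
  assumes "prime p" "int p ^ k dvd z" shows "pint p (int k) (of_int z)"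
proof -
  from assms(2) obtain w where "z = int p ^ k * w" by (auto elim: dvdE)
  then have "(of_int z :: rat) = of_int w / of_int 1 * power_int (of_nat p) (int k)" by simp
  moreover have "\<not> int p dvd 1" using assms(1) by (auto simp: prime_nat_iff)
  ultimately show ?thesis unfolding pint_def by (metis one_neq_zero)
qed


lemma pint_divide_nat:
  assumes "prime p" "pint p e x" "z > 0"
  shows "pint p (e - int (multiplicity p z)) (x / of_nat z)"
proof -
  from assms(2) obtain a b where ab: "b \<noteq> 0" "\<not> int p dvd b" "x = of_int a / of_int b * power_int (of_nat p) e"
    unfolding pint_def by blast
  have nu: "\<not> is_unit p" using assms(1) prime_gt_1_nat by auto
  obtain w where w: "z = p ^ multiplicity p z * w" "\<not> p dvd w"
    using multiplicity_decompose'[of z p] assms(3) nu by blast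
  define r where "r = multiplicity p z"
  have w0: "w \<noteq> 0" using w assms(3) by (metis mult_0_right less_irrefl)
  have p0: "(of_nat p :: rat) \<noteq> 0" using assms(1) by (simp add: prime_gt_0_nat)
  have "power_int (of_nat p :: rat) e = power_int (of_nat p) ((e - int r) + int r)" by simp
  also have "\<dots> = power_int (of_nat p) (e - int r) * of_nat p ^ r"
    using p0 by (subst power_int_add) auto
  finally have "power_int (of_nat p :: rat) e = power_int (of_nat p) (e - int r) * of_nat p ^ r" .
  then have "x / of_nat z = of_int a / of_int (b * int w) * power_int (of_nat p) (e - int r)"
    using ab(3) w(1) w0 p0 unfolding r_def[symmetric] by (simp add: field_simps)
  moreover have "\<not> int p dvd b * int w" using ab(2) w(2) assms(1)
    by (simp add: prime_dvd_mult_iff int_dvd_int_iff prime_nat_int_transfer)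
  ultimately show ?thesis unfolding pint_def r_def using ab(1) w0 by (metis mult_eq_0_iff of_nat_eq_0_iff)
qed

lemma pint_cancel_unit:
  assumes "prime p" "pint p e (x * of_int u)" "\<not> int p dvd u"
  shows "pint p e x"
proof -
  from assms(2) obtain a b where ab: "b \<noteq> 0" "\<not> int p dvd b" "x * of_int u = of_int a / of_int b * power_int (of_nat p) e"
    unfolding pint_def by blast
  have u0: "u \<noteq> 0" using assms(3) by auto
  have "x = (x * of_int u) / of_int u" using u0 by simp
  also have "\<dots> = of_int a / of_int (b * u) * power_int (of_nat p) e"
    using ab(3) u0 by simp
  finally have "x = of_int a / of_int (b * u) * power_int (of_nat p) e" .
  moreover have "\<not> int p dvd b * u" using ab(2) assms(3) assms(1)
    by (simp add: prime_dvd_mult_iff prime_nat_int_transfer)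
  ultimately show ?thesis unfolding pint_def using ab(1) u0 by (metis mult_eq_0_iff)
qed

lemma pint_qcong:
  assumes "prime p" "pint p (int s) (x - y)"
  shows "qcong p s x y"
proof (cases "x - y = 0")
  case True then show ?thesis unfolding qcong_def by simp
next
  case False
  define q where "q = x - y"
  from assms(2) obtain a b where ab: "b \<noteq> 0" "\<not> int p dvd b" "q = of_int a / of_int b * of_nat p ^ s"
    unfolding pint_def q_def by auto
  obtain c d where cd: "quotient_of q = (c, d)" by (cases "quotient_of q")
  have d0: "d > 0" using cd quotient_of_denom_pos by blast
  have qcd: "q = of_int c / of_int d" using cd quotient_of_div by blast
  have cop: "coprime c d" using cd quotient_of_coprime by blast
  have c0: "c \<noteq> 0" using False qcd q_def by auto
  have eq: "c * b = a * int p ^ s * d"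
  proof -
    have "(of_int c :: rat) / of_int d = of_int a / of_int b * of_nat p ^ s" using qcd ab(3) by simp
    then have "(of_int c :: rat) * of_int b = of_int a * of_nat p ^ s * of_int d"
      using d0 ab(1) by (simp add: field_simps)
    then have "(of_int (c * b) :: rat) = of_int (a * int p ^ s * d)" by simp
    then show ?thesis by (simp only: of_int_eq_iff)
  qed
  have pp: "prime (int p)" using assms(1) by (simp add: prime_nat_int_transfer)
  have cop2: "coprime (int p ^ s) b"
    using ab(2) pp by (simp add: prime_imp_coprime coprime_power_left_iff)
  have "int p ^ s dvd c * b" using eq by simp
  then have dvdc: "int p ^ s dvd c" using cop2 coprime_dvd_mult_left_iff by blast
  have nd: "\<not> int p dvd d"
  proof
    assume "int p dvd d"
    then have "int p dvd c * b" using eq by (metis dvd_mult)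
    then have "int p dvd c" using ab(2) pp by (simp add: prime_dvd_mult_iff)
    with \<open>int p dvd d\<close> cop pp show False
      by (metis coprime_common_divisor not_prime_unit)
  qed
  have m1: "multiplicity (int p) c \<ge> s" using multiplicity_geI[OF c0 _ dvdc] pp assms(1) prime_gt_1_nat[OF assms(1)] by (simp add: not_prime_unit)
  have m2: "multiplicity (int p) d = 0" using nd not_dvd_imp_multiplicity_0 by blast
  show ?thesis unfolding qcong_def qord_def using cd m1 m2 by (simp add: q_def[symmetric])
qed


definition aN :: "nat \<Rightarrow> nat \<Rightarrow> rat" where
  "aN N j = fact N / fact (N + j)"

definition Ahat :: "nat \<Rightarrow> rat fps" where
  "Ahat N = Abs_fps (aN N)"

definition bN :: "nat \<Rightarrow> nat \<Rightarrow> rat" where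
  "bN N n = inverse (Ahat N) $ n"

lemma aN_0 [simp]: "aN N 0 = 1"
  by (simp add: aN_def)

lemma Ahat_0 [simp]: "Ahat N $ 0 = 1"
  by (simp add: Ahat_def)

lemma denom_eq:
  "fps_exp 1 - (\<Sum>k<N. fps_const (1 / fact k) * fps_X ^ k) = (fps_const (1 / fact N) * fps_X ^ N) * Ahat N"
proof (rule fps_ext)
  fix n
  have l: "(fps_exp 1 - (\<Sum>k<N. fps_const (1 / fact k) * fps_X ^ k)) $ n = (if n < N then 0 else (1::rat) / fact n)"
    by (simp add: fps_sum_nth if_distrib[where f="\<lambda>x. _ * x"] of_nat_fact cong: if_cong)
  have r: "((fps_const (1 / fact N) * fps_X ^ N) * Ahat N) $ n = (if n < N then 0 else 1 / fact n)"
    by (simp add: mult.assoc fps_X_power_mult_nth Ahat_def aN_def)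
  show "(fps_exp 1 - (\<Sum>k<N. fps_const (1 / fact k) * fps_X ^ k)) $ n =
        ((fps_const (1 / fact N) * fps_X ^ N) * Ahat N) $ n" using l r by simp
qed

lemma hyp_bernoulli_bN: "hyp_bernoulli N n = fact n * bN N n"
proof -
  have h0: "fps_const (1 / fact N) * fps_X ^ N \<noteq> (0 :: rat fps)"
    by (metis (no_types) fps_X_power_nth fps_mult_left_const_nth divide_eq_0_iff fact_nonzero
        mult_eq_0_iff of_nat_eq_0_iff one_neq_zero fps_zero_nth)
  have "(fps_const (1 / fact N) * fps_X ^ N) / ((fps_const (1 / fact N) * fps_X ^ N) * Ahat N)
        = (1 * (fps_const (1 / fact N) * fps_X ^ N)) / (Ahat N * (fps_const (1 / fact N) * fps_X ^ N))"
    by (simp add: mult.commute)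
  also have "\<dots> = 1 / Ahat N" by (rule fps_divide_cancel[OF h0])
  also have "\<dots> = inverse (Ahat N)" by (simp add: fps_divide_unit)
  finally show ?thesis unfolding hyp_bernoulli_def denom_eq bN_def by simp
qed

lemma bN_0 [simp]: "bN N 0 = 1"
  by (simp add: bN_def)

lemma bN_rec:
  assumes "n > 0"
  shows "bN N n = - (\<Sum>i=1..n. aN N i * bN N (n - i))"
proof -
  have "(Ahat N * inverse (Ahat N)) $ n = 0"
    using inverse_mult_eq_1'[of "Ahat N"] assms by simp
  then have "(\<Sum>i=0..n. aN N i * bN N (n - i)) = 0"
    by (simp add: fps_mult_nth Ahat_def bN_def)
  also have "(\<Sum>i=0..n. aN N i * bN N (n - i)) = bN N n + (\<Sum>i=1..n. aN N i * bN N (n - i))"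
    by (simp add: sum.atLeast_Suc_atMost)
  finally show ?thesis by (simp add: eq_neg_iff_add_eq_0)
qed


lemma X_Ahat1: "fps_X * Ahat 1 = fps_exp (1::rat) - 1"
proof (rule fps_ext)
  fix n show "(fps_X * Ahat 1) $ n = (fps_exp (1::rat) - 1) $ n"
    by (cases n) (simp_all add: Ahat_def aN_def algebra_simps)
qed

lemma geom_fps: "(\<Sum>a<M. E ^ a) * (E - 1) = E ^ M - (1 :: 'a :: comm_ring_1)"
  by (induction M) (simp_all add: algebra_simps)

lemma expM_nth: "(fps_exp (1::rat) ^ M - 1) $ j = (if j = 0 then 0 else of_nat M ^ j / fact j)"
  by (simp add: fps_exp_power_mult)

lemma powsum:
  "(\<Sum>a<M. (of_nat a :: rat) ^ k) = fact k * (\<Sum>i=0..k. bN 1 i * of_nat M ^ (k + 1 - i) / fact (k + 1 - i))"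
proof -
  define E where "E = fps_exp (1::rat)"
  define B where "B = inverse (Ahat 1)"
  define S where "S = (\<Sum>a<M. E ^ a)"
  have BA: "B * Ahat 1 = 1" unfolding B_def by (rule inverse_mult_eq_1) simp
  have "fps_X * S = (B * Ahat 1) * fps_X * S" using BA by simp
  also have "\<dots> = B * (fps_X * Ahat 1) * S" by (simp add: mult_ac)
  also have "\<dots> = B * (S * (E - 1))" unfolding X_Ahat1 E_def by (simp add: mult_ac)
  also have "\<dots> = B * (E ^ M - 1)" unfolding S_def by (simp add: geom_fps)
  finally have eq: "fps_X * S = B * (E ^ M - 1)" .
  have lhs: "(fps_X * S) $ Suc k = (\<Sum>a<M. (of_nat a :: rat) ^ k) / fact k"
    unfolding S_def E_def by (simp add: fps_sum_nth fps_exp_power_mult sum_divide_distrib)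
  have "(B * (E ^ M - 1)) $ Suc k = (\<Sum>i=0..Suc k. B $ i * (E ^ M - 1) $ (Suc k - i))"
    by (simp add: fps_mult_nth)
  also have "\<dots> = (\<Sum>i=0..k. B $ i * (E ^ M - 1) $ (Suc k - i))"
    by (simp add: E_def fps_exp_power_mult)
  also have "\<dots> = (\<Sum>i=0..k. bN 1 i * of_nat M ^ (k + 1 - i) / fact (k + 1 - i))"
  proof (rule sum.cong)
    fix i assume "i \<in> {0..k}"
    then have "Suc k - i = k + 1 - i" "Suc k - i \<noteq> 0" by auto
    then have "(E ^ M - 1) $ (Suc k - i) = of_nat M ^ (k + 1 - i) / fact (k + 1 - i)"
      unfolding E_def by (subst expM_nth) simp
    then show "B $ i * (E ^ M - 1) $ (Suc k - i) = bN 1 i * of_nat M ^ (k + 1 - i) / fact (k + 1 - i)"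
      by (simp add: B_def bN_def)
  qed simp
  finally have rhs: "(B * (E ^ M - 1)) $ Suc k = (\<Sum>i=0..k. bN 1 i * of_nat M ^ (k + 1 - i) / fact (k + 1 - i))" .
  show ?thesis using lhs rhs eq by (simp add: field_simps)
qed


definition Bern :: "nat \<Rightarrow> rat" where "Bern k = fact k * bN 1 k"

lemma mult_lt_self:
  assumes "prime p" "d > 0" shows "multiplicity p d < d"
proof -
  have "p ^ multiplicity p d dvd d" by (rule multiplicity_dvd)
  then have le: "p ^ multiplicity p d \<le> d" using assms(2) by (rule dvd_imp_le)
  have "multiplicity p d < 2 ^ multiplicity p d" by (rule less_exp)
  also have "\<dots> \<le> p ^ multiplicity p d" using prime_ge_2_nat[OF assms(1)] by (rule power_mono) simp
  finally show ?thesis using le by simp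
qed

lemma pint_p_pow: "prime p \<Longrightarrow> pint p (int k) (of_nat p ^ k)"
  using pint_dvd_int[of p k "int p ^ k"] by simp

lemma pint_times_p_pow:
  assumes "prime p" "pint p e x" shows "pint p (e + int k) (x * of_nat p ^ k)"
  using pint_mult[OF assms(1,2) pint_p_pow[OF assms(1)]] .

lemma coeff_identity:
  assumes "i < j"
  shows "(fact j :: rat) / (fact i * fact (j + 1 - i)) = of_nat (j choose i) / of_nat (j + 1 - i)"
proof -
  have f: "(fact (j + 1 - i) :: rat) = of_nat (j + 1 - i) * fact (j - i)"
    using assms by (metis Suc_diff_le Suc_eq_plus1 fact_Suc less_imp_le_nat of_nat_fact of_nat_mult)
  have c: "of_nat (j choose i) = (fact j :: rat) / (fact i * fact (j - i))"
    using assms by (simp add: binomial_fact)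
  show ?thesis unfolding f c by (simp add: divide_divide_eq_left mult_ac)
qed

lemma von_staudt_lite:
  assumes "prime p" shows "pint p (-1) (Bern j)"
proof (induction j rule: less_induct)
  case (less j)
  define P where "P = (of_nat p :: rat)"
  have p0: "p > 0" using assms prime_gt_0_nat by blast
  have ps: "(\<Sum>a<p. (of_nat a :: rat) ^ j) = fact j * (\<Sum>i=0..j. bN 1 i * P ^ (j + 1 - i) / fact (j + 1 - i))"
    unfolding P_def by (rule powsum)
  also have "\<dots> = Bern j * P + (\<Sum>i=0..<j. fact j * bN 1 i * P ^ (j + 1 - i) / fact (j + 1 - i))"
    by (simp add: sum.atLeast0_atMost_Suc atLeast0LessThan[symmetric] sum_distrib_left Bern_def
         atLeastLessThanSuc_atLeastAtMost[symmetric] algebra_simps)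
  finally have eq: "Bern j * P = (\<Sum>a<p. (of_nat a :: rat) ^ j) - (\<Sum>i=0..<j. fact j * bN 1 i * P ^ (j + 1 - i) / fact (j + 1 - i))"
    by simp
  have t: "pint p 0 (fact j * bN 1 i * P ^ (j + 1 - i) / fact (j + 1 - i))" if i: "i < j" for i
  proof -
    define d where "d = j + 1 - i"
    have d0: "d > 0" using i d_def by simp
    have "fact j * bN 1 i * P ^ (j + 1 - i) / fact (j + 1 - i)
        = (of_nat (j choose i) * (Bern i * P ^ d)) / of_nat d"
      using coeff_identity[OF i] unfolding d_def Bern_def
      by (simp add: field_simps)
    moreover have "pint p (0 + (-1 + int d)) (of_nat (j choose i) * (Bern i * P ^ d))"
      by (rule pint_mult[OF assms pint_of_nat[OF assms] pint_times_p_pow[OF assms less.IH[OF i], unfolded P_def[symmetric]]])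
    then have "pint p (-1 + int d - int (multiplicity p d)) (of_nat (j choose i) * (Bern i * P ^ d) / of_nat d)"
      using pint_divide_nat[OF assms _ d0] by simp
    moreover have "multiplicity p d < d" using mult_lt_self[OF assms d0] .
    moreover have "(0::int) \<le> -1 + int d - int (multiplicity p d)"
      using \<open>multiplicity p d < d\<close> by linarith
    ultimately show ?thesis using pint_mono[OF assms] by metis
  qed
  have "pint p 0 (Bern j * P)" unfolding eq
    by (intro pint_diff[OF assms] pint_sum[OF assms] t) (auto simp: pint_of_nat[OF assms] pint_sum[OF assms] of_nat_power[symmetric] simp del: of_nat_power)
  then have "pint p (0 - int (multiplicity p p)) (Bern j * P / of_nat p)"
    using pint_divide_nat[OF assms _ p0] by blast
  then show ?case using p0 assms by (simp add: P_def multiplicity_prime)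
qed


lemma term_pint:
  assumes "prime p" "i < j" "pint p e X"
  shows "pint p (-1 + e - int (multiplicity p (j + 1 - i))) (fact j * bN 1 i * X / fact (j + 1 - i))"
proof -
  define d where "d = j + 1 - i"
  have d0: "d > 0" using assms d_def by simp
  have "fact j * bN 1 i * X / fact (j + 1 - i) = (of_nat (j choose i) * (Bern i * X)) / of_nat d"
    using coeff_identity[OF assms(2)] unfolding d_def Bern_def by (simp add: field_simps)
  moreover have "pint p (0 + (-1 + e)) (of_nat (j choose i) * (Bern i * X))"
    by (rule pint_mult[OF assms(1) pint_of_nat[OF assms(1)] pint_mult[OF assms(1) von_staudt_lite[OF assms(1)] assms(3)]])
  then have "pint p (-1 + e - int (multiplicity p d)) (of_nat (j choose i) * (Bern i * X) / of_nat d)"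
    using pint_divide_nat[OF assms(1) _ d0] by simp
  ultimately show ?thesis unfolding d_def by simp
qed

lemma powsum_split:
  "(\<Sum>a<M. (of_nat a :: rat) ^ k) = Bern k * of_nat M + (\<Sum>i=0..<k. fact k * bN 1 i * of_nat M ^ (k + 1 - i) / fact (k + 1 - i))"
proof -
  have "(\<Sum>a<M. (of_nat a :: rat) ^ k) = fact k * (\<Sum>i=0..k. bN 1 i * of_nat M ^ (k + 1 - i) / fact (k + 1 - i))"
    by (rule powsum)
  also have "\<dots> = Bern k * of_nat M + (\<Sum>i=0..<k. fact k * bN 1 i * of_nat M ^ (k + 1 - i) / fact (k + 1 - i))"
    by (simp add: sum.atLeast0_atMost_Suc atLeast0LessThan[symmetric] sum_distrib_left Bern_def
         atLeastLessThanSuc_atLeastAtMost[symmetric] algebra_simps)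
  finally show ?thesis .
qed

lemma S_expand:
  assumes "prime p" "t \<ge> 1"
  shows "pint p (int t - 2) ((\<Sum>a<p ^ t. (of_nat a :: rat) ^ k) / of_nat p ^ t - Bern k)"
proof -
  define P where "P = (of_nat p :: rat)"
  have P0: "P \<noteq> 0" using assms(1) P_def prime_gt_0_nat by auto
  have ps: "(\<Sum>a<p ^ t. (of_nat a :: rat) ^ k) = Bern k * P ^ t + (\<Sum>i=0..<k. fact k * bN 1 i * P ^ (t * (k + 1 - i)) / fact (k + 1 - i))"
    using powsum_split[where M="p ^ t" and k=k] by (simp add: P_def power_mult)
  have "(\<Sum>a<p ^ t. (of_nat a :: rat) ^ k) / P ^ t - Bern k
      = (\<Sum>i=0..<k. fact k * bN 1 i * P ^ (t * (k + 1 - i)) / fact (k + 1 - i)) / P ^ t"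
    unfolding ps using P0 by (simp add: add_divide_distrib)
  also have "\<dots> = (\<Sum>i=0..<k. fact k * bN 1 i * P ^ (t * (k - i)) / fact (k + 1 - i))"
  proof -
    have "P ^ (t * (k + 1 - i)) / P ^ t = P ^ (t * (k - i))" if "i < k" for i
    proof -
      have "t * (k + 1 - i) = t * (k - i) + t" using that by (simp add: algebra_simps Suc_diff_le)
      then have "P ^ (t * (k + 1 - i)) = P ^ (t * (k - i)) * P ^ t"
        by (simp add: power_add)
      then show ?thesis using P0 by simp
    qed
    then have "fact k * bN 1 i * P ^ (t * (k + 1 - i)) / fact (k + 1 - i) / P ^ t
        = fact k * bN 1 i * P ^ (t * (k - i)) / fact (k + 1 - i)" if "i < k" for i
      using that by (metis (no_types, lifting) divide_divide_eq_left mult.commute times_divide_eq_right)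
    then show ?thesis unfolding sum_divide_distrib by (intro sum.cong) auto
  qed
  finally have eq: "(\<Sum>a<p ^ t. (of_nat a :: rat) ^ k) / P ^ t - Bern k
      = (\<Sum>i=0..<k. fact k * bN 1 i * P ^ (t * (k - i)) / fact (k + 1 - i))" .
  have "pint p (int t - 2) (fact k * bN 1 i * P ^ (t * (k - i)) / fact (k + 1 - i))" if i: "i < k" for i
  proof -
    define d where "d = k + 1 - i"
    have d2: "d \<ge> 2" using i d_def by simp
    have md: "multiplicity p d < d" using mult_lt_self[OF assms(1)] d2 by simp
    have 1: "pint p (-1 + int (t * (k - i)) - int (multiplicity p d)) (fact k * bN 1 i * P ^ (t * (k - i)) / fact (k + 1 - i))"
      unfolding d_def P_def by (rule term_pint[OF assms(1) i pint_p_pow[OF assms(1)]])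
    have "k - i = d - 1" using d_def i by simp
    then have C: "int (t * (k - i)) = int t * int d - int t" using d2 by (simp add: of_nat_diff algebra_simps)
    have A: "(int t - 1) * (int d - 2) \<ge> 0" using assms(2) d2 by (intro mult_nonneg_nonneg) auto
    have B: "(int t - 1) * (int d - 2) = int t * int d - 2 * int t - int d + 2" by (simp add: algebra_simps)
    have "int t - 2 \<le> -1 + int (t * (k - i)) - int (multiplicity p d)"
      using md A B C by linarith
    then show ?thesis using pint_mono[OF assms(1) 1] by blast
  qed
  then show ?thesis unfolding P_def[symmetric] eq by (intro pint_sum[OF assms(1)]) auto
qed

definition Rs :: "nat \<Rightarrow> nat \<Rightarrow> nat set" where
  "Rs p s = {a. a < p ^ s \<and> \<not> p dvd a}"

lemma finite_Rs [simp]: "finite (Rs p s)"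
  unfolding Rs_def by auto

lemma sum_Rs:
  assumes "prime p" "s \<ge> 1"
  shows "(\<Sum>a\<in>Rs p s. (of_nat a :: rat) ^ k) = (\<Sum>a<p ^ s. (of_nat a :: rat) ^ k) - of_nat p ^ k * (\<Sum>a<p ^ (s - 1). (of_nat a :: rat) ^ k)"
proof -
  have p0: "p > 0" using assms prime_gt_0_nat by auto
  have ps: "p ^ s = p * p ^ (s - 1)" using assms(2) by (metis Suc_diff_le diff_Suc_1 power_Suc)
  have U: "{..<p ^ s} = Rs p s \<union> (\<lambda>b. p * b) ` {..<p ^ (s - 1)}"
  proof (intro equalityI subsetI)
    fix a assume a: "a \<in> {..<p ^ s}"
    show "a \<in> Rs p s \<union> (\<lambda>b. p * b) ` {..<p ^ (s - 1)}"
    proof (cases "p dvd a")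
      case True
      then obtain b where b: "a = p * b" by (auto elim: dvdE)
      then have "b < p ^ (s - 1)" using a ps p0 by auto
      then show ?thesis using b by auto
    next
      case False then show ?thesis using a unfolding Rs_def by auto
    qed
  next
    fix a assume "a \<in> Rs p s \<union> (\<lambda>b. p * b) ` {..<p ^ (s - 1)}"
    then show "a \<in> {..<p ^ s}" unfolding Rs_def using ps p0 by auto
  qed
  have D: "Rs p s \<inter> (\<lambda>b. p * b) ` {..<p ^ (s - 1)} = {}" unfolding Rs_def by auto
  have inj: "inj_on (\<lambda>b. p * b) {..<p ^ (s - 1)}" using p0 by (auto simp: inj_on_def)
  have "(\<Sum>a<p ^ s. (of_nat a :: rat) ^ k) = (\<Sum>a\<in>Rs p s. (of_nat a :: rat) ^ k) + (\<Sum>a\<in>(\<lambda>b. p * b) ` {..<p ^ (s - 1)}. (of_nat a :: rat) ^ k)"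
    unfolding U by (rule sum.union_disjoint) (use D in auto)
  also have "(\<Sum>a\<in>(\<lambda>b. p * b) ` {..<p ^ (s - 1)}. (of_nat a :: rat) ^ k) = of_nat p ^ k * (\<Sum>a<p ^ (s - 1). (of_nat a :: rat) ^ k)"
    by (subst sum.reindex[OF inj]) (simp add: sum_distrib_left power_mult_distrib)
  finally show ?thesis by simp
qed

lemma T_expand:
  assumes "prime p" "s \<ge> 2" "k \<ge> 1"
  shows "pint p (int s - 3) ((\<Sum>a\<in>Rs p s. (of_nat a :: rat) ^ k) / of_nat p ^ s - (1 - of_nat p ^ (k - 1)) * Bern k)"
proof -
  define P where "P = (of_nat p :: rat)"
  have P0: "P \<noteq> 0" using assms(1) P_def prime_gt_0_nat by auto
  define S1 where "S1 = (\<Sum>a<p ^ s. (of_nat a :: rat) ^ k)"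
  define S2 where "S2 = (\<Sum>a<p ^ (s - 1). (of_nat a :: rat) ^ k)"
  have e1: "pint p (int s - 2) (S1 / P ^ s - Bern k)"
    unfolding S1_def P_def by (rule S_expand[OF assms(1)]) (use assms in auto)
  have e2: "pint p (int (s - 1) - 2) (S2 / P ^ (s - 1) - Bern k)"
    unfolding S2_def P_def by (rule S_expand[OF assms(1)]) (use assms in auto)
  have e2': "pint p (int (s - 1) - 2 + int (k - 1)) ((S2 / P ^ (s - 1) - Bern k) * P ^ (k - 1))"
    unfolding P_def by (rule pint_times_p_pow[OF assms(1) e2[unfolded P_def]])
  have ps: "P ^ s = P * P ^ (s - 1)" using assms(2) by (metis Suc_diff_le diff_Suc_1 power_Suc one_le_numeral order_trans)
  have pk: "P ^ k = P * P ^ (k - 1)" using assms(3) by (metis Suc_diff_le diff_Suc_1 power_Suc)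
  have "(\<Sum>a\<in>Rs p s. (of_nat a :: rat) ^ k) / P ^ s - (1 - P ^ (k - 1)) * Bern k
      = (S1 / P ^ s - Bern k) - (S2 / P ^ (s - 1) - Bern k) * P ^ (k - 1)"
    unfolding sum_Rs[OF assms(1) order_trans[OF one_le_numeral assms(2)]] S1_def[symmetric] S2_def[symmetric] P_def[symmetric]
    using P0 ps pk by (simp add: field_simps)
  moreover have "pint p (int s - 3) ((S1 / P ^ s - Bern k) - (S2 / P ^ (s - 1) - Bern k) * P ^ (k - 1))"
    by (rule pint_diff[OF assms(1) pint_mono[OF assms(1) e1] pint_mono[OF assms(1) e2']]) (use assms in auto)
  ultimately show ?thesis unfolding P_def by simp
qed


lemma binom_diff:
  "(r + x) ^ Suc n - r ^ Suc n
   = of_nat (Suc n) * x * (\<Sum>j\<le>n. of_nat (n choose j) * x ^ j * r ^ (n - j) / of_nat (Suc j) :: rat)"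
proof -
  have "(r + x) ^ Suc n = (x + r) ^ Suc n" by (simp add: add.commute)
  also have "\<dots> = (\<Sum>i\<le>Suc n. of_nat (Suc n choose i) * x ^ i * r ^ (Suc n - i))"
    by (rule binomial_ring)
  also have "\<dots> = r ^ Suc n + (\<Sum>i<Suc n. of_nat (Suc n choose Suc i) * x ^ Suc i * r ^ (Suc n - Suc i))"
    by (subst sum.atMost_shift) simp
  also have "(\<Sum>i<Suc n. of_nat (Suc n choose Suc i) * x ^ Suc i * r ^ (Suc n - Suc i))
      = (\<Sum>j\<le>n. of_nat (Suc n) * x * (of_nat (n choose j) * x ^ j * r ^ (n - j) / of_nat (Suc j)))"
    unfolding lessThan_Suc_atMost
  proof (rule sum.cong)
    fix j assume "j \<in> {..n}"
    have ab: "of_nat (Suc j) * of_nat (Suc n choose Suc j) = (of_nat (Suc n) * of_nat (n choose j) :: rat)"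
      using binomial_absorption[of j "Suc n"] by (metis diff_Suc_1 of_nat_mult)
    have "of_nat (Suc n choose Suc j) = (of_nat (Suc n) * of_nat (n choose j) / of_nat (Suc j) :: rat)"
      using ab by (simp add: field_simps del: of_nat_Suc binomial_Suc_Suc)
    then show "of_nat (Suc n choose Suc j) * x ^ Suc j * r ^ (Suc n - Suc j)
        = of_nat (Suc n) * x * (of_nat (n choose j) * x ^ j * r ^ (n - j) / of_nat (Suc j))"
      by (simp del: of_nat_Suc binomial_Suc_Suc)
  qed simp
  finally show ?thesis by (simp add: sum_distrib_left)
qed

lemma pint_power:
  assumes "prime p" "pint p e x" shows "pint p (e * int k) (x ^ k)"
proof (induction k)
  case 0 then show ?case using pint_of_nat[OF assms(1), of 1] by simp
next
  case (Suc k)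
  have "pint p (e + e * int k) (x * x ^ k)" by (rule pint_mult[OF assms(1,2) Suc])
  then show ?case by (simp add: algebra_simps)
qed

lemma ctrick_term:
  assumes "prime p" "s \<ge> 1" "pint p 0 G" "pint p 0 Fa"
  shows "pint p (int s - 1) (of_nat (n choose Suc j) * (of_nat (p ^ s) * G) ^ Suc j * Fa ^ (n - Suc j) / of_nat (Suc (Suc j)) :: rat)"
proof -
  note that = assms(3,4)
  have pj: "pint p (int (s * Suc j)) ((of_nat (p ^ s) :: rat) ^ Suc j)"
    using pint_p_pow[OF assms(1), of "s * Suc j"] by (simp only: of_nat_power power_mult of_nat_mult)
  have "pint p (0 + int (s * Suc j) + 0 + 0) (of_nat (n choose Suc j) * (of_nat (p ^ s) ^ Suc j * G ^ Suc j) * Fa ^ (n - Suc j) :: rat)"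
  proof -
    have gp: "pint p (0 * int (Suc j)) (G ^ Suc j)"
      by (rule pint_power[OF assms(1) that(1)])
    have fp: "pint p (0 * int (n - Suc j)) (Fa ^ (n - Suc j))"
      by (rule pint_power[OF assms(1) that(2)])
    have 1: "pint p (0 + int (s * Suc j)) (of_nat (n choose Suc j) * (of_nat (p ^ s)) ^ Suc j :: rat)"
      by (rule pint_mult[OF assms(1) pint_of_nat[OF assms(1)] pj])
    have 2: "pint p (0 + int (s * Suc j) + 0) (of_nat (n choose Suc j) * (of_nat (p ^ s)) ^ Suc j * G ^ Suc j :: rat)"
      by (rule pint_mult[OF assms(1) 1]) (use gp in simp)
    have 3: "pint p (0 + int (s * Suc j) + 0 + 0) (of_nat (n choose Suc j) * (of_nat (p ^ s)) ^ Suc j * G ^ Suc j * Fa ^ (n - Suc j) :: rat)"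
      by (rule pint_mult[OF assms(1) 2]) (use fp in simp)
    then show ?thesis by (simp add: mult.assoc)
  qed
  then have "pint p (int (s * Suc j) - int (multiplicity p (Suc (Suc j))))
     (of_nat (n choose Suc j) * (of_nat (p ^ s) ^ Suc j * G ^ Suc j) * Fa ^ (n - Suc j) / of_nat (Suc (Suc j)) :: rat)"
    using pint_divide_nat[OF assms(1), of _ _ "Suc (Suc j)"] by simp
  moreover have "multiplicity p (Suc (Suc j)) < Suc (Suc j)" by (rule mult_lt_self[OF assms(1)]) simp
  moreover have "int s - 1 \<le> int (s * Suc j) - int (Suc j)"
  proof -
    have "(int s - 1) * int j \<ge> 0" using assms(2) by simp
    then show ?thesis by (simp add: algebra_simps)
  qed
  ultimately have "int s - 1 \<le> int (s * Suc j) - int (multiplicity p (Suc (Suc j)))" by linarith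
  moreover have "(of_nat (p ^ s) * G) ^ Suc j = (of_nat (p ^ s) :: rat) ^ Suc j * G ^ Suc j"
    by (rule power_mult_distrib)
  ultimately show ?thesis using pint_mono[OF assms(1)]
    \<open>pint p (int (s * Suc j) - int (multiplicity p (Suc (Suc j)))) _\<close> by (metis mult.assoc)
qed

lemma ctrick_bij:
  assumes "prime p" "\<not> p dvd c"
  shows "(\<lambda>a. c * a mod p ^ s) ` Rs p s = Rs p s" "inj_on (\<lambda>a. c * a mod p ^ s) (Rs p s)"
proof -
  have p0: "p > 0" using assms prime_gt_0_nat by auto
  have "coprime p c" using assms by (simp add: prime_imp_coprime)
  then have cop: "coprime c (p ^ s)" by (simp add: coprime_commute coprime_power_right_iff)
  show inj: "inj_on (\<lambda>a. c * a mod p ^ s) (Rs p s)"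
  proof (rule inj_onI)
    fix a b assume a: "a \<in> Rs p s" and b: "b \<in> Rs p s" and e: "c * a mod p ^ s = c * b mod p ^ s"
    then have "[c * a = c * b] (mod p ^ s)" by (simp add: cong_def)
    then have "[a = b] (mod p ^ s)" using cong_mult_lcancel_nat[OF cop] by blast
    then show "a = b" using a b unfolding Rs_def by (auto intro: cong_less_modulus_unique_nat)
  qed
  show "(\<lambda>a. c * a mod p ^ s) ` Rs p s = Rs p s"
  proof (rule endo_inj_surj[OF finite_Rs _ inj], rule subsetI)
    fix y assume "y \<in> (\<lambda>a. c * a mod p ^ s) ` Rs p s"
    then obtain a where a: "a \<in> Rs p s" and y: "y = c * a mod p ^ s" by auto
    have "y < p ^ s" using y p0 by simp
    moreover have "\<not> p dvd y"
    proof
      assume "p dvd y"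
      have "p dvd p ^ s" using a unfolding Rs_def by (cases s) auto
      have "c * a = p ^ s * (c * a div p ^ s) + y" using y by simp
      then have "p dvd c * a" using \<open>p dvd y\<close> \<open>p dvd p ^ s\<close> by (metis dvd_add dvd_mult2)
      then show False using a assms unfolding Rs_def by (auto simp: prime_dvd_mult_iff)
    qed
    ultimately show "y \<in> Rs p s" unfolding Rs_def by simp
  qed
qed

lemma ctrick:
  assumes "prime p" "s \<ge> 1" "\<not> p dvd c" "k \<ge> 1"
  shows "pint p (int s - 1) ((of_nat c ^ k - 1) * (\<Sum>a\<in>Rs p s. (of_nat a :: rat) ^ k) / (of_nat k * of_nat p ^ s)
            - (\<Sum>a\<in>Rs p s. of_nat (c * a mod p ^ s) ^ (k - 1) * of_nat (c * a div p ^ s)))"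
proof -
  define M where "M = p ^ s"
  define f where "f a = c * a mod M" for a
  define g where "g a = c * a div M" for a
  obtain n where kn: "k = Suc n" using assms(4) by (cases k) auto
  have M0: "(of_nat M :: rat) \<noteq> 0" using assms(1) M_def prime_gt_0_nat by auto
  have bij: "f ` Rs p s = Rs p s" "inj_on f (Rs p s)" using ctrick_bij[OF assms(1,3)] unfolding f_def M_def by auto
  have T: "(\<Sum>a\<in>Rs p s. (of_nat (f a) :: rat) ^ k) = (\<Sum>a\<in>Rs p s. (of_nat a :: rat) ^ k)"
    using sum.reindex[OF bij(2), of "\<lambda>a. (of_nat a :: rat) ^ k"] bij(1) by simp
  have ca: "(of_nat c :: rat) * of_nat a = of_nat (f a) + of_nat M * of_nat (g a)" for a
    unfolding f_def g_def by (metis add.commute div_mult_mod_eq mult.commute of_nat_add of_nat_mult)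
  define V where "V a = (\<Sum>j\<le>n. of_nat (n choose j) * (of_nat M * of_nat (g a)) ^ j * of_nat (f a) ^ (n - j) / of_nat (Suc j) :: rat)" for a
  have "(of_nat c ^ k - 1) * (\<Sum>a\<in>Rs p s. (of_nat a :: rat) ^ k)
      = (\<Sum>a\<in>Rs p s. (of_nat c * of_nat a) ^ k) - (\<Sum>a\<in>Rs p s. (of_nat (f a) :: rat) ^ k)"
    unfolding T by (simp add: algebra_simps sum_distrib_left sum_subtractf power_mult_distrib)
  also have "\<dots> = (\<Sum>a\<in>Rs p s. (of_nat (f a) + of_nat M * of_nat (g a)) ^ k - (of_nat (f a) :: rat) ^ k)"
    unfolding ca by (simp add: sum_subtractf)
  also have "\<dots> = (\<Sum>a\<in>Rs p s. of_nat k * of_nat M * (of_nat (g a) * V a))"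
    unfolding kn binom_diff V_def by (simp add: mult_ac)
  finally have eq: "(of_nat c ^ k - 1) * (\<Sum>a\<in>Rs p s. (of_nat a :: rat) ^ k) / (of_nat k * of_nat M)
      = (\<Sum>a\<in>Rs p s. of_nat (g a) * V a)"
    using M0 assms(4) by (simp add: sum_distrib_left[symmetric])
  have Vs: "V a = of_nat (f a) ^ n + (\<Sum>j<n. of_nat (n choose Suc j) * (of_nat M * of_nat (g a)) ^ Suc j * of_nat (f a) ^ (n - Suc j) / of_nat (Suc (Suc j)))" for a
    unfolding V_def by (subst sum.atMost_shift) simp
  have "pint p (int s - 1) (of_nat (g a) * V a - of_nat (f a) ^ (k - 1) * of_nat (g a))" for a
  proof -
    have "of_nat (g a) * V a - of_nat (f a) ^ (k - 1) * of_nat (g a)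
        = of_nat (g a) * (\<Sum>j<n. of_nat (n choose Suc j) * (of_nat M * of_nat (g a)) ^ Suc j * of_nat (f a) ^ (n - Suc j) / of_nat (Suc (Suc j)))"
      unfolding Vs kn by (simp add: algebra_simps)
    moreover have "pint p (0 + (int s - 1)) \<dots>"
      by (intro pint_mult[OF assms(1)] pint_of_nat[OF assms(1)] pint_sum[OF assms(1)])
         (unfold M_def, rule ctrick_term[OF assms(1,2) pint_of_nat[OF assms(1)] pint_of_nat[OF assms(1)]])
    ultimately show ?thesis by simp
  qed
  then have "pint p (int s - 1) ((\<Sum>a\<in>Rs p s. of_nat (g a) * V a) - (\<Sum>a\<in>Rs p s. of_nat (f a) ^ (k - 1) * of_nat (g a)))"
    unfolding sum_subtractf[symmetric] by (intro pint_sum[OF assms(1)])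
  moreover have "(of_nat c ^ k - 1) * (\<Sum>a\<in>Rs p s. (of_nat a :: rat) ^ k) / (of_nat k * of_nat p ^ s)
      = (\<Sum>a\<in>Rs p s. of_nat (g a) * V a)" using eq by (simp add: M_def)
  ultimately show ?thesis unfolding f_def g_def M_def by simp
qed


lemma euler_pp:
  assumes "prime p" "\<not> p dvd u" "(p - 1) * p ^ v dvd d"
  shows "int p ^ (v + 1) dvd int u ^ d - 1"
proof -
  have "coprime p u" using assms by (simp add: prime_imp_coprime)
  then have "coprime u (p ^ (v + 1))" by (simp add: coprime_commute coprime_power_right_iff)
  then have e: "[u ^ totient (p ^ (v + 1)) = 1] (mod p ^ (v + 1))" by (rule euler_theorem)
  have tot: "totient (p ^ (v + 1)) = (p - 1) * p ^ v" using totient_prime_power[OF assms(1), of "v + 1"] by simp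
  obtain t where t: "d = (p - 1) * p ^ v * t" using assms(3) by (auto elim: dvdE)
  have "[(u ^ totient (p ^ (v + 1))) ^ t = 1 ^ t] (mod p ^ (v + 1))" by (rule cong_pow[OF e])
  then have "[u ^ d = 1] (mod p ^ (v + 1))" unfolding tot t by (simp add: power_mult)
  then have "[int (u ^ d) = int 1] (mod int (p ^ (v + 1)))" by (simp only: cong_int_iff)
  then show ?thesis by (simp add: cong_iff_dvd_diff)
qed

definition Yk :: "nat \<Rightarrow> nat \<Rightarrow> rat" where
  "Yk p k = (1 - of_nat p ^ (k - 1)) * Bern k / of_nat k"

definition Zk :: "nat \<Rightarrow> nat \<Rightarrow> nat \<Rightarrow> nat \<Rightarrow> rat" where
  "Zk p c s k = (\<Sum>a\<in>Rs p s. of_nat (c * a mod p ^ s) ^ (k - 1) * of_nat (c * a div p ^ s))"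

lemma kummer_step:
  assumes "prime p" "k \<ge> 1" "\<not> p dvd c" "s \<ge> v + 4 + k"
  shows "pint p (int v + 1) ((of_nat c ^ k - 1) * Yk p k - Zk p c s k)"
proof -
  define P where "P = (of_nat p :: rat)"
  define T where "T = (\<Sum>a\<in>Rs p s. (of_nat a :: rat) ^ k)"
  define U where "U = (of_nat c ^ k - 1 :: rat)"
  have s2: "s \<ge> 2" "s \<ge> 1" using assms by auto
  have k0: "k > 0" using assms by simp
  have e1: "pint p (int s - 3) (T / P ^ s - (1 - P ^ (k - 1)) * Bern k)"
    unfolding T_def P_def by (rule T_expand[OF assms(1) s2(1) assms(2)])
  have e2: "pint p (int s - 3 - int (multiplicity p k)) ((T / P ^ s - (1 - P ^ (k - 1)) * Bern k) / of_nat k)"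
    by (rule pint_divide_nat[OF assms(1) e1 k0])
  have Uint: "pint p 0 U" unfolding U_def
    using pint_of_int[OF assms(1), of "int c ^ k - 1"] by simp
  have e3: "pint p (0 + (int s - 3 - int (multiplicity p k))) (U * ((T / P ^ s - (1 - P ^ (k - 1)) * Bern k) / of_nat k))"
    by (rule pint_mult[OF assms(1) Uint e2])
  have e4: "pint p (int s - 1) (U * T / (of_nat k * P ^ s) - Zk p c s k)"
    using ctrick[OF assms(1) s2(2) assms(3,2)] unfolding U_def T_def P_def Zk_def by simp
  have eq: "U * Yk p k - Zk p c s k = (U * T / (of_nat k * P ^ s) - Zk p c s k)
        - U * ((T / P ^ s - (1 - P ^ (k - 1)) * Bern k) / of_nat k)"
    unfolding Yk_def P_def using k0 by (simp add: field_simps)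
  have mk: "multiplicity p k < k" using mult_lt_self[OF assms(1) k0] .
  have "pint p (int v + 1) ((U * T / (of_nat k * P ^ s) - Zk p c s k)
        - U * ((T / P ^ s - (1 - P ^ (k - 1)) * Bern k) / of_nat k))"
    by (rule pint_diff[OF assms(1) pint_mono[OF assms(1) e4] pint_mono[OF assms(1) e3]])
       (use assms(4) mk in linarith)+
  then have "pint p (int v + 1) (U * Yk p k - Zk p c s k)" unfolding eq .
  then show ?thesis unfolding U_def .
qed

lemma primroot_unit:
  assumes "prime p"
  obtains c where "\<not> p dvd c" "\<And>k. \<not> (p - 1) dvd k \<Longrightarrow> \<not> int p dvd int c ^ k - 1"
proof -
  obtain c where c: "residue_primroot p c" using prime_primitive_root_exists[OF prime_gt_1_nat[OF assms] assms] by blast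
  then have ordc: "ord p c = p - 1" and cop: "coprime p c"
    unfolding residue_primroot_def using totient_prime[OF assms] by auto
  have nd: "\<not> p dvd c" using cop assms
    by (metis coprime_absorb_left not_prime_unit)
  have "\<not> int p dvd int c ^ k - 1" if "\<not> (p - 1) dvd k" for k
  proof
    assume "int p dvd int c ^ k - 1"
    then have "[int (c ^ k) = int 1] (mod int p)" by (simp add: cong_iff_dvd_diff)
    then have "[c ^ k = 1] (mod p)" by (simp only: cong_int_iff)
    then have "ord p c dvd k" using ord_divides by blast
    with that ordc show False by simp
  qed
  then show ?thesis using that nd by blast
qed

lemma kummer1:
  assumes "prime p" "n \<ge> 1" "m \<ge> n" "(p - 1) * p ^ v dvd (m - n)"
    and "\<not> (p - 1) dvd m" "\<not> (p - 1) dvd n"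
  shows "pint p (int v + 1) (Yk p m - Yk p n)"
proof -
  obtain c where c: "\<not> p dvd c" "\<And>k. \<not> (p - 1) dvd k \<Longrightarrow> \<not> int p dvd int c ^ k - 1"
    using primroot_unit[OF assms(1)] by blast
  define s where "s = v + 4 + m"
  define Ua where "Ua = (of_nat c ^ m - 1 :: rat)"
  define Ub where "Ub = (of_nat c ^ n - 1 :: rat)"
  have m1: "m \<ge> 1" using assms by simp
  have hm: "pint p (int v + 1) (Ua * Yk p m - Zk p c s m)"
    unfolding Ua_def by (rule kummer_step[OF assms(1) m1 c(1)]) (simp add: s_def)
  have hn: "pint p (int v + 1) (Ub * Yk p n - Zk p c s n)"
    unfolding Ub_def by (rule kummer_step[OF assms(1) assms(2) c(1)]) (use assms(3) in \<open>simp add: s_def\<close>)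
  have Zint: "pint p 0 (Zk p c s n)" unfolding Zk_def
    by (intro pint_sum[OF assms(1)]) (metis of_nat_mult of_nat_power pint_of_nat[OF assms(1)])
  have "pint p 0 (Ub * Yk p n)"
    using pint_add[OF assms(1) pint_mono[OF assms(1) hn] Zint] by simp
  then have Yn: "pint p 0 (Yk p n)"
    using pint_cancel_unit[OF assms(1), of 0 "Yk p n" "int c ^ n - 1"] c(2)[OF assms(6)]
    unfolding Ub_def by (simp add: mult.commute)
  have dd: "int p ^ (v + 1) dvd int u ^ (m - n) - 1" if "\<not> p dvd u" for u
    by (rule euler_pp[OF assms(1) that assms(4)])
  have dZ: "pint p (int v + 1) (Zk p c s m - Zk p c s n)"
  proof -
    have "Zk p c s m - Zk p c s n = (\<Sum>a\<in>Rs p s. (of_nat (c * a mod p ^ s) ^ (n - 1) * of_nat (c * a div p ^ s))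
         * of_int (int (c * a mod p ^ s) ^ (m - n) - 1))"
      unfolding Zk_def sum_subtractf[symmetric]
    proof (rule sum.cong)
      fix a
      have "m - 1 = (n - 1) + (m - n)" using assms(2,3) by simp
      then show "of_nat (c * a mod p ^ s) ^ (m - 1) * of_nat (c * a div p ^ s) -
          of_nat (c * a mod p ^ s) ^ (n - 1) * (of_nat (c * a div p ^ s) :: rat) =
          of_nat (c * a mod p ^ s) ^ (n - 1) * of_nat (c * a div p ^ s) *
          of_int (int (c * a mod p ^ s) ^ (m - n) - 1)"
        by (simp add: power_add algebra_simps)
    qed simp
    moreover have "pint p (int v + 1) (of_nat (c * a mod p ^ s) ^ (n - 1) * of_nat (c * a div p ^ s)
         * of_int (int (c * a mod p ^ s) ^ (m - n) - 1))" if a: "a \<in> Rs p s" for a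
    proof -
      have "c * a mod p ^ s \<in> Rs p s" using a ctrick_bij(1)[OF assms(1) c(1), of s] by blast
      then have "\<not> p dvd c * a mod p ^ s" unfolding Rs_def by simp
      then have "pint p (int (v + 1)) (of_int (int (c * a mod p ^ s) ^ (m - n) - 1))"
        using dd pint_dvd_int[OF assms(1)] by blast
      from pint_mult[OF assms(1) pint_of_nat[OF assms(1), of "(c * a mod p ^ s) ^ (n - 1) * (c * a div p ^ s)"] this]
      show ?thesis by (simp add: add.commute)
    qed
    ultimately show ?thesis by (simp add: pint_sum[OF assms(1)])
  qed
  have dU: "pint p (int v + 1 + 0) ((Ua - Ub) * Yk p n)"
  proof (rule pint_mult[OF assms(1) _ Yn])
    have "Ua - Ub = of_nat c ^ n * of_int (int c ^ (m - n) - 1)"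
      unfolding Ua_def Ub_def using assms(3) by (simp add: algebra_simps power_add[symmetric])
    moreover have "pint p (0 + int (v + 1)) (of_nat c ^ n * of_int (int c ^ (m - n) - 1))"
      by (rule pint_mult[OF assms(1)]) (metis of_nat_power pint_of_nat[OF assms(1)], rule pint_dvd_int[OF assms(1) dd[OF c(1)]])
    ultimately show "pint p (int v + 1) (Ua - Ub)" by (simp add: add.commute)
  qed
  have key: "Ua * (Yk p m - Yk p n) = (Ua * Yk p m - Zk p c s m) - (Ub * Yk p n - Zk p c s n)
      + (Zk p c s m - Zk p c s n) - (Ua - Ub) * Yk p n"
    by (simp add: algebra_simps)
  have "pint p (int v + 1) (Ua * (Yk p m - Yk p n))"
    unfolding key using pint_diff[OF assms(1) pint_add[OF assms(1) pint_diff[OF assms(1) hm hn] dZ] dU[simplified]] .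
  then show ?thesis
    using pint_cancel_unit[OF assms(1), of _ "Yk p m - Yk p n" "int c ^ m - 1"] c(2)[OF assms(5)]
    unfolding Ua_def by (simp add: mult.commute)
qed


definition ff :: "nat \<Rightarrow> nat \<Rightarrow> nat" where
  "ff p t = multiplicity p (fact t :: nat)"

lemma ff_Suc:
  assumes "prime p" shows "ff p (Suc t) = ff p t + multiplicity p (Suc t)"
proof -
  have "(fact (Suc t) :: nat) = Suc t * fact t" by simp
  then show ?thesis unfolding ff_def
    using prime_elem_multiplicity_mult_distrib[of p "Suc t" "fact t :: nat"] assms
    by (simp add: add.commute)
qed

lemma ff_small: assumes "prime p" "t < p" shows "ff p t = 0"
  unfolding ff_def using assms prime_dvd_fact_iff[OF assms(1), of t]
  by (simp add: not_dvd_imp_multiplicity_0)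

lemma ff_mono: assumes "prime p" "a \<le> b" shows "ff p a \<le> ff p b"
  unfolding ff_def by (rule dvd_imp_multiplicity_le) (use assms in \<open>auto simp: fact_dvd\<close>)

lemma ff_super: assumes "prime p" shows "ff p a + ff p b \<le> ff p (a + b)"
proof -
  have "multiplicity p (fact a * fact b :: nat) \<le> multiplicity p (fact (a + b) :: nat)"
    by (rule dvd_imp_multiplicity_le[OF fact_fact_dvd_fact]) simp
  moreover have "multiplicity p (fact a * fact b :: nat) = ff p a + ff p b"
    unfolding ff_def using assms by (intro prime_elem_multiplicity_mult_distrib) auto
  ultimately show ?thesis unfolding ff_def by simp
qed

lemma ff_p: assumes "prime p" shows "ff p p = 1"
proof -
  obtain q where q: "p = Suc q" using assms prime_gt_0_nat by (cases p) auto
  have "ff p q = 0" using ff_small[OF assms] q by simp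
  then show ?thesis using ff_Suc[OF assms, of q] q assms by (simp add: multiplicity_prime)
qed

lemma ff_ge1: assumes "prime p" "t \<ge> p" shows "ff p t \<ge> 1"
  using ff_mono[OF assms(1,2)] ff_p[OF assms(1)] by simp

lemma ff_mult_p: assumes "prime p" shows "ff p (p * q) \<ge> q"
proof (induction q)
  case (Suc q)
  have "ff p (p * q) + ff p p \<le> ff p (p * q + p)" by (rule ff_super[OF assms])
  then show ?case using Suc ff_p[OF assms] by (simp add: add.commute)
qed simp

lemma ff_div: assumes "prime p" shows "ff p t \<ge> t div p"
proof -
  have "p * (t div p) \<le> t" by simp
  then show ?thesis using ff_mult_p[OF assms, of "t div p"] ff_mono[OF assms] order_trans by blast
qed

lemma pow_ge: assumes "p \<ge> 3" "r \<ge> 2" shows "p ^ r \<ge> p * r + 2"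
  using assms(2)
proof (induction r rule: nat_induct_at_least)
  case base
  have "p * p \<ge> 3 * p" using assms by simp
  then have "p * p \<ge> p * 2 + 2" using assms by linarith
  then show ?case using assms by (simp add: power2_eq_square)
next
  case (Suc r)
  have a: "p * (p * r + 2) \<le> p * p ^ r" using Suc(2) by (rule mult_le_mono2)
  have b: "p * Suc r + 2 \<le> p * (p * r + 2)"
  proof -
    have "p * (p * r + 2) = p * p * r + 2 * p" by (simp add: algebra_simps)
    moreover have "p * p * r \<ge> 3 * p * r" using assms by simp
    moreover have "3 * p * r \<ge> p * r + p" using Suc(1) by simp
    moreover have "2 * p \<ge> 2" using assms by simp
    moreover have "p * Suc r = p * r + p" by simp
    ultimately show ?thesis by linarith
  qed
  show ?case using a b by simp
qed

lemma ff_step3: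
  assumes "prime p" "p \<ge> 3" "k \<ge> p"
  shows "ff p (Suc k) \<le> ff p k + ff p (k - 1)"
proof -
  define r where "r = multiplicity p (Suc k)"
  have fs: "ff p (Suc k) = ff p k + r" unfolding r_def by (rule ff_Suc[OF assms(1)])
  have dv: "p ^ r dvd Suc k" unfolding r_def by (rule multiplicity_dvd)
  have r_le: "r \<le> ff p (k - 1)"
  proof (cases "r \<ge> 2")
    case True
    have "p ^ r \<le> Suc k" using dv by (rule dvd_imp_le) simp
    moreover have "p ^ r \<ge> p * r + 2" by (rule pow_ge[OF assms(2) True])
    ultimately have "p * r \<le> k - 1" by simp
    then have "r \<le> (k - 1) div p" using assms(1) prime_gt_0_nat
      by (metis div_le_mono nonzero_mult_div_cancel_left not_gr_zero)
    then show ?thesis using ff_div[OF assms(1), of "k - 1"] by simp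
  next
    case False
    show ?thesis
    proof (cases "r = 0")
      case False
      with \<open>\<not> r \<ge> 2\<close> have r1: "r = 1" by simp
      then have "p dvd Suc k" using dv by simp
      then obtain q where q: "Suc k = p * q" by (auto elim: dvdE)
      have "q \<ge> 2"
      proof (rule ccontr)
        assume "\<not> q \<ge> 2"
        then have "q \<le> 1" by simp
        then have "p * q \<le> p" by simp
        then show False using q assms(3) by linarith
      qed
      then have "p * q \<ge> 2 * p" by simp
      then have "k - 1 \<ge> p" using q assms by linarith
      then show ?thesis using ff_ge1[OF assms(1)] r1 by simp
    qed simp
  qed
  then show ?thesis using fs by simp
qed

definition vv :: "nat \<Rightarrow> nat \<Rightarrow> nat" where "vv p i = ff p (Suc i)"

primrec VV :: "nat \<Rightarrow> nat \<Rightarrow> nat" where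
  "VV p 0 = 0"
| "VV p (Suc k) = VV p k + vv p (Suc k)"

definition GG :: "nat \<Rightarrow> nat \<Rightarrow> nat" where
  "GG p k = VV p k + (if k = p - 1 then 1 else 0)"

definition beta :: "nat \<Rightarrow> nat \<Rightarrow> nat" where
  "beta p j = (if j < p - 1 then 0 else 1 + ff p j)"

lemma VV_mono: "j \<le> k \<Longrightarrow> VV p j \<le> VV p k"
  by (induction k) (auto simp: le_Suc_eq)

lemma VV_ge1: assumes "j < k" shows "VV p j + vv p k \<le> VV p k"
proof -
  obtain k' where k: "k = Suc k'" using assms by (cases k) auto
  then show ?thesis using VV_mono[of j k' p] assms by simp
qed

lemma VV_ge2: assumes "j + 1 < k" shows "VV p j + vv p (k - 1) + vv p k \<le> VV p k"
proof -
  obtain k' where k: "k = Suc k'" using assms by (cases k) auto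
  then show ?thesis using VV_ge1[of j k' p] assms by simp
qed

lemma VV_ge3: assumes "j + 2 < k" shows "VV p j + vv p (k - 2) + vv p (k - 1) + vv p k \<le> VV p k"
proof -
  obtain k' where k: "k = Suc k'" using assms by (cases k) auto
  have "VV p j + vv p (k' - 1) + vv p k' \<le> VV p k'" using VV_ge2[of j k' p] assms k by simp
  moreover have "k' - 1 = k - 2" using k by simp
  ultimately show ?thesis using k by simp
qed

lemma vv_mono: "prime p \<Longrightarrow> i \<le> k \<Longrightarrow> vv p i \<le> vv p k"
  unfolding vv_def by (rule ff_mono) auto

lemma vv_small: "prime p \<Longrightarrow> i + 1 < p \<Longrightarrow> vv p i = 0"
  unfolding vv_def by (rule ff_small) auto

lemma VV_small: assumes "prime p" "k + 1 < p" shows "VV p k = 0"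
  using assms(2) by (induction k) (auto simp: vv_small[OF assms(1)])

lemma VV_pm1: assumes "prime p" shows "VV p (p - 1) = 1"
proof -
  obtain q where q: "p = Suc (Suc q)" using prime_ge_2_nat[OF assms]
    by (metis add_2_eq_Suc le_Suc_ex)
  have "VV p q = 0" using VV_small[OF assms, of q] q by simp
  then show ?thesis using q ff_p[OF assms] by (simp add: vv_def)
qed

lemma beta_le_VV:
  assumes "prime p" "p \<ge> 3" shows "beta p j \<le> VV p j"
proof (cases "j < p - 1")
  case False
  then have j: "j \<ge> p - 1" "j \<ge> 2" using assms by auto
  have "VV p 0 + vv p (j - 1) + vv p j \<le> VV p j" by (rule VV_ge2) (use j in simp)
  moreover have "vv p (j - 1) = ff p j" unfolding vv_def using j by simp
  moreover have "vv p j \<ge> 1" unfolding vv_def using j by (intro ff_ge1[OF assms(1)]) simp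
  ultimately show ?thesis unfolding beta_def using False by simp
qed (simp add: beta_def)

lemma T1:
  assumes "prime p" "p \<ge> 3" "1 \<le> i" "i < k"
  shows "vv p i + GG p (k - i) \<le> GG p k"
proof -
  have a: "VV p (k - i) + vv p k \<le> VV p k" by (rule VV_ge1) (use assms in simp)
  have b: "vv p i \<le> vv p k" using vv_mono[OF assms(1)] assms by simp
  show ?thesis
  proof (cases "k - i = p - 1")
    case False then show ?thesis using a b unfolding GG_def by simp
  next
    case True
    show ?thesis
    proof (cases "i = 1")
      case True
      have "vv p 1 = 0" using vv_small[OF assms(1)] assms by simp
      moreover have "vv p k \<ge> 1" unfolding vv_def using \<open>k - i = p - 1\<close> True assms
        by (intro ff_ge1[OF assms(1)]) simp
      moreover have "k \<noteq> p - 1" using \<open>k - i = p - 1\<close> assms by simp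
      ultimately show ?thesis using a \<open>k - i = p - 1\<close> True unfolding GG_def by simp
    next
      case False
      have c: "VV p (k - i) + vv p (k - 1) + vv p k \<le> VV p k" by (rule VV_ge2) (use assms False in simp)
      have "vv p (k - 1) \<ge> 1" unfolding vv_def using \<open>k - i = p - 1\<close> False assms
        by (intro ff_ge1[OF assms(1)]) simp
      moreover have "k \<noteq> p - 1" using \<open>k - i = p - 1\<close> assms by simp
      ultimately show ?thesis using b c \<open>k - i = p - 1\<close> unfolding GG_def by simp
    qed
  qed
qed

lemma T2:
  assumes "prime p" "p \<ge> 3" "1 \<le> i" "i \<le> k"
  shows "2 * vv p i + beta p (k - i) \<le> GG p k"
proof (cases "i + 1 < p")
  case True
  then have "vv p i = 0" by (rule vv_small[OF assms(1)])
  moreover have "beta p (k - i) \<le> VV p k"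
    using beta_le_VV[OF assms(1,2), of "k - i"] VV_mono[of "k - i" k p] by simp
  ultimately show ?thesis unfolding GG_def by simp
next
  case False
  then have ip: "i \<ge> p - 1" by simp
  show ?thesis
  proof (cases "k = i")
    case True
    show ?thesis
    proof (cases "k = p - 1")
      case True
      then have "vv p i = 1" using \<open>k = i\<close> ff_p[OF assms(1)] unfolding vv_def
        using assms(1) prime_gt_0_nat by (metis Suc_diff_1)
      then show ?thesis using True \<open>k = i\<close> VV_pm1[OF assms(1)] unfolding GG_def beta_def
        using assms by simp
    next
      case False
      then have kp: "k \<ge> p" using ip \<open>k = i\<close> by simp
      have "VV p 0 + vv p (k - 2) + vv p (k - 1) + vv p k \<le> VV p k" by (rule VV_ge3) (use kp assms in simp)
      moreover have "ff p (Suc k) \<le> ff p k + ff p (k - 1)" by (rule ff_step3[OF assms(1,2) kp])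
      moreover have "vv p (k - 2) = ff p (k - 1)" "vv p (k - 1) = ff p k" "vv p k = ff p (Suc k)"
        unfolding vv_def using kp assms by (auto simp: Suc_diff_Suc numeral_2_eq_2)
      ultimately show ?thesis using \<open>k = i\<close> unfolding GG_def beta_def using assms by simp
    qed
  next
    case False
    then have ik: "i < k" using assms by simp
    have a: "VV p 0 + vv p (k - 1) + vv p k \<le> VV p k" by (rule VV_ge2) (use ik assms in simp)
    show ?thesis
    proof (cases "k - i < p - 1")
      case True
      have "vv p i \<le> vv p k" "vv p i \<le> vv p (k - 1)" using vv_mono[OF assms(1)] ik by auto
      then show ?thesis using a True unfolding GG_def beta_def by simp
    next
      case False
      have kp: "k \<ge> 2 * p - 2" using False ip by simp
      have b: "VV p 0 + vv p (k - 2) + vv p (k - 1) + vv p k \<le> VV p k" by (rule VV_ge3) (use kp assms in simp)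
      have c: "ff p (Suc i) + ff p (k - i) \<le> ff p (Suc k)"
        using ff_super[OF assms(1), of "Suc i" "k - i"] ik by simp
      have d: "ff p (Suc i) \<le> ff p k" using ff_mono[OF assms(1)] ik by simp
      have e: "ff p (k - 1) \<ge> 1" by (rule ff_ge1[OF assms(1)]) (use kp assms in simp)
      have "vv p (k - 2) = ff p (k - 1)" "vv p (k - 1) = ff p k" "vv p k = ff p (Suc k)"
        unfolding vv_def using kp assms by (auto simp: Suc_diff_Suc numeral_2_eq_2)
      then show ?thesis using b c d e False unfolding GG_def beta_def vv_def by simp
    qed
  qed
qed


definition QQ :: "nat \<Rightarrow> nat \<Rightarrow> nat" where
  "QQ N i = (\<Prod>l=1..i. N + l)"

lemma fact_QQ: "fact (N + i) = fact N * QQ N i"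
proof (induction i)
  case (Suc i)
  have "QQ N (Suc i) = QQ N i * (N + Suc i)" unfolding QQ_def by simp
  then show ?case using Suc by (simp add: algebra_simps)
qed (simp add: QQ_def)

lemma aN_QQ: "aN N i = 1 / of_nat (QQ N i)"
proof -
  have "(fact (N + i) :: rat) = fact N * of_nat (QQ N i)" using fact_QQ[of N i]
    by (metis of_nat_fact of_nat_mult)
  then show ?thesis unfolding aN_def by simp
qed

lemma QQ1: "QQ 1 i = fact (Suc i)"
  using fact_QQ[of 1 i] by simp

lemma QQ_cong:
  assumes "int p ^ E dvd int N - 1" "N \<ge> 1"
  shows "int p ^ E dvd int (QQ N i) - int (QQ 1 i)"
proof -
  have "[int N = int 1] (mod int p ^ E)" using assms by (simp add: cong_iff_dvd_diff)
  then have "[N = 1] (mod p ^ E)" by (metis cong_int_iff of_nat_power)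
  then have "[N + l = 1 + l] (mod p ^ E)" for l using cong_add[OF _ cong_refl[of l]] by blast
  then have "[QQ N i = QQ 1 i] (mod p ^ E)" unfolding QQ_def by (intro cong_prod) auto
  then have "[int (QQ N i) = int (QQ 1 i)] (mod int (p ^ E))" by (simp only: cong_int_iff)
  then show ?thesis by (simp add: cong_iff_dvd_diff)
qed

lemma aN_bounds:
  assumes "prime p" "int p ^ E dvd int N - 1" "N \<ge> 1" "ff p (Suc i) < E"
  shows "pint p (- int (ff p (Suc i))) (aN N i)"
    and "pint p (int E - 2 * int (ff p (Suc i))) (aN N i - aN 1 i)"
proof -
  define v where "v = ff p (Suc i)"
  define F where "F = (fact (Suc i) :: nat)"
  define P where "P = (of_nat p :: rat)"
  have P0: "P \<noteq> 0" using assms(1) P_def prime_gt_0_nat by auto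
  have nu: "\<not> is_unit p" using assms(1) prime_gt_1_nat by auto
  obtain w where w: "F = p ^ v * w" "\<not> p dvd w"
    using multiplicity_decompose'[of F p] nu unfolding F_def v_def ff_def by auto
  have w0: "w \<noteq> 0" using w(1) F_def by (metis fact_nonzero mult_0_right)
  obtain t where t: "int (QQ N i) - int F = int p ^ E * t"
    using QQ_cong[OF assms(2,3), of i] unfolding QQ1 F_def by (auto elim: dvdE)
  define u where "u = int w + int p ^ (E - v) * t"
  have pE: "int p ^ E = int p ^ v * int p ^ (E - v)" using assms(4) v_def
    by (simp add: power_add[symmetric])
  have QN: "int (QQ N i) = int p ^ v * u" using t w(1) pE unfolding u_def by (simp add: algebra_simps)
  have nu2: "\<not> int p dvd u"
  proof
    assume "int p dvd u"
    moreover have "int p dvd int p ^ (E - v) * t" using assms(4) v_def by (simp add: dvd_mult2)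
    ultimately have "int p dvd int w" unfolding u_def by (metis dvd_add_left_iff add.commute)
    then show False using w(2) by simp
  qed
  have u0: "u \<noteq> 0" using nu2 by auto
  have QNr: "(of_nat (QQ N i) :: rat) = P ^ v * of_int u"
    using QN unfolding P_def by (metis of_int_mult of_int_of_nat_eq of_int_power)
  have Fr: "(of_nat (QQ 1 i) :: rat) = P ^ v * of_nat w"
    unfolding QQ1 F_def[symmetric] w(1) P_def by simp
  have "aN N i = of_int 1 / of_int u * power_int P (- int v)"
    unfolding aN_QQ QNr using P0 u0 by (simp add: power_int_minus field_simps)
  then show "pint p (- int (ff p (Suc i))) (aN N i)"
    unfolding pint_def v_def[symmetric] P_def using u0 nu2 by blast
  have "aN N i - aN 1 i = of_int (- t) / of_int (u * int w) * power_int P (int E - 2 * int v)"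
  proof -
    have "aN N i - aN 1 i = (of_int (int w) - of_int u) / (P ^ v * of_int u * of_int (int w))"
      unfolding aN_QQ QNr Fr using P0 u0 w0 by (simp add: field_simps)
    also have "of_int (int w) - of_int u = - (P ^ (E - v) * of_int t)"
      unfolding u_def P_def by simp
    also have "P ^ (E - v) = P ^ v * power_int P (int E - 2 * int v)"
    proof -
      have "int (E - v) = int v + (int E - 2 * int v)" using assms(4) v_def by simp
      then have "power_int P (int (E - v)) = power_int P (int v + (int E - 2 * int v))" by (simp only:)
      also have "\<dots> = power_int P (int v) * power_int P (int E - 2 * int v)"
        using P0 by (rule power_int_add[OF disjI1])
      finally show ?thesis by (simp only: power_int_of_nat)
    qed
    finally show ?thesis using P0 u0 w0 by (simp add: field_simps)
  qed
  moreover have "u * int w \<noteq> 0" using u0 w0 by simp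
  moreover have "\<not> int p dvd u * int w" using nu2 w(2) assms(1)
    by (simp add: prime_dvd_mult_iff prime_nat_int_transfer)
  ultimately show "pint p (int E - 2 * int (ff p (Suc i))) (aN N i - aN 1 i)"
    unfolding pint_def v_def[symmetric] P_def by blast
qed

lemma b1_small:
  assumes "prime p" "j + 1 < p"
  shows "pint p 0 (bN 1 j)"
  using assms(2)
proof (induction j rule: less_induct)
  case (less j)
  show ?case
  proof (cases "j = 0")
    case True then show ?thesis using pint_of_nat[OF assms(1), of 1] by simp
  next
    case False
    have "pint p 0 (aN 1 i * bN 1 (j - i))" if i: "i \<in> {1..j}" for i
    proof -
      have "aN 1 i = 1 / of_nat (fact (Suc i))" unfolding aN_QQ QQ1 ..
      moreover have "pint p (0 - int (multiplicity p (fact (Suc i) :: nat))) (1 / of_nat (fact (Suc i)))"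
        using pint_divide_nat[OF assms(1) pint_of_nat[OF assms(1), of 1], of "fact (Suc i)"] by (simp del: fact_Suc)
      moreover have "multiplicity p (fact (Suc i) :: nat) = 0"
        using ff_small[OF assms(1), of "Suc i"] less.prems i unfolding ff_def by simp
      ultimately have "pint p 0 (aN 1 i)" by simp
      moreover have "pint p 0 (bN 1 (j - i))" using less.IH[of "j - i"] less.prems i False by simp
      ultimately show ?thesis using pint_mult[OF assms(1)] by fastforce
    qed
    then show ?thesis unfolding bN_rec[of j 1, OF _] using False
      by (subst bN_rec) (auto intro!: pint_uminus pint_sum[OF assms(1)])
  qed
qed

lemma b1_bound:
  assumes "prime p" "p \<ge> 3"
  shows "pint p (- int (beta p j)) (bN 1 j)"
proof (cases "j < p - 1")
  case True
  then show ?thesis using b1_small[OF assms(1), of j] unfolding beta_def by simp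
next
  case False
  have "bN 1 j = Bern j / of_nat (fact j)" unfolding Bern_def by simp
  moreover have "pint p (-1 - int (multiplicity p (fact j :: nat))) (Bern j / of_nat (fact j))"
    by (rule pint_divide_nat[OF assms(1) von_staudt_lite[OF assms(1)]]) simp
  ultimately show ?thesis unfolding beta_def ff_def using False by simp
qed

lemma perturb:
  assumes "prime p" "p \<ge> 3" "int p ^ E dvd int N - 1" "N \<ge> 1" "VV p K < E" "k \<le> K"
  shows "pint p (int E - int (GG p k)) (bN N k - bN 1 k)"
  using assms(6)
proof (induction k rule: less_induct)
  case (less k)
  show ?case
  proof (cases "k = 0")
    case True then show ?thesis using pint_zero[OF assms(1)] by simp
  next
    case False
    have ffE: "ff p (Suc i) < E" if "1 \<le> i" "i \<le> K" for i
    proof -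
      have "VV p (i - 1) + vv p i \<le> VV p i" using VV_ge1[of "i - 1" i p] that by simp
      then have "vv p i \<le> VV p K" using VV_mono[OF that(2), of p] by simp
      then show ?thesis using assms(5) unfolding vv_def by simp
    qed
    have eq: "bN N k - bN 1 k = - (\<Sum>i=1..k. aN N i * (bN N (k - i) - bN 1 (k - i)) + (aN N i - aN 1 i) * bN 1 (k - i))"
    proof -
      have r1: "bN N k = - (\<Sum>i=1..k. aN N i * bN N (k - i))" by (rule bN_rec) (use False in simp)
      have r2: "bN 1 k = - (\<Sum>i=1..k. aN 1 i * bN 1 (k - i))" by (rule bN_rec) (use False in simp)
      have "bN N k - bN 1 k = - (\<Sum>i=1..k. aN N i * bN N (k - i)) - - (\<Sum>i=1..k. aN 1 i * bN 1 (k - i))"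
        using r1 r2 by (simp only:)
      also have "\<dots> = - (\<Sum>i=1..k. aN N i * (bN N (k - i) - bN 1 (k - i)) + (aN N i - aN 1 i) * bN 1 (k - i))"
        by (simp add: sum_subtractf[symmetric] sum_negf[symmetric] algebra_simps)
      finally show ?thesis .
    qed
    have "pint p (int E - int (GG p k)) (aN N i * (bN N (k - i) - bN 1 (k - i)) + (aN N i - aN 1 i) * bN 1 (k - i))"
      if i: "i \<in> {1..k}" for i
    proof (rule pint_add[OF assms(1)])
      have iK: "i \<le> K" using i less.prems by simp
      have i1: "1 \<le> i" using i by simp
      note ab = aN_bounds[OF assms(1,3,4) ffE[OF i1 iK]]
      show "pint p (int E - int (GG p k)) (aN N i * (bN N (k - i) - bN 1 (k - i)))"
      proof (cases "i = k")
        case True then show ?thesis using pint_zero[OF assms(1)] by simp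
      next
        case False
        have h: "pint p (int E - int (GG p (k - i))) (bN N (k - i) - bN 1 (k - i))"
          using less.IH[of "k - i"] i less.prems by simp
        have "pint p (- int (ff p (Suc i)) + (int E - int (GG p (k - i)))) (aN N i * (bN N (k - i) - bN 1 (k - i)))"
          by (rule pint_mult[OF assms(1) ab(1) h])
        moreover have "vv p i + GG p (k - i) \<le> GG p k" using T1[OF assms(1,2)] i False by simp
        ultimately show ?thesis using pint_mono[OF assms(1)] unfolding vv_def by fastforce
      qed
      have "pint p ((int E - 2 * int (ff p (Suc i))) + - int (beta p (k - i))) ((aN N i - aN 1 i) * bN 1 (k - i))"
        by (rule pint_mult[OF assms(1) ab(2) b1_bound[OF assms(1,2)]])
      moreover have "2 * vv p i + beta p (k - i) \<le> GG p k" using T2[OF assms(1,2)] i by simp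
      ultimately show "pint p (int E - int (GG p k)) ((aN N i - aN 1 i) * bN 1 (k - i))"
        using pint_mono[OF assms(1)] unfolding vv_def by fastforce
    qed
    then show ?thesis unfolding eq by (intro pint_uminus pint_sum[OF assms(1)])
  qed
qed


lemma mult_prod_VV:
  assumes "prime p"
  shows "multiplicity p (\<Prod>k=0..m. fact (1 + k) :: nat) = VV p m"
proof (induction m)
  case 0 then show ?case by simp
next
  case (Suc m)
  have "(\<Prod>k=0..Suc m. fact (1 + k) :: nat) = (\<Prod>k=0..m. fact (1 + k)) * fact (1 + Suc m)"
    by simp
  moreover have "multiplicity p ((\<Prod>k=0..m. fact (1 + k) :: nat) * fact (1 + Suc m))
      = multiplicity p (\<Prod>k=0..m. fact (1 + k) :: nat) + multiplicity p (fact (1 + Suc m) :: nat)"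
    using assms by (intro prime_elem_multiplicity_mult_distrib) auto
  ultimately show ?case using Suc by (simp add: vv_def ff_def)
qed

lemma Xk_split:
  assumes "k > 0"
  shows "(1 - of_nat p ^ (k - 1)) * hyp_bernoulli N k / of_nat k
     = Yk p k + of_int (1 - int p ^ (k - 1)) * (of_nat (fact k) * ((bN N k - bN 1 k) / of_nat k))"
  unfolding hyp_bernoulli_bN Yk_def Bern_def using assms by (simp add: field_simps)

theorem proposition4:
  fixes p \<nu> N m n :: nat
  assumes "prime p"
    and "N \<ge> 1"
    and "m > 0" and "n > 0" and "even m" and "even n" and "m \<ge> n"
    and "[m = n] (mod (p - 1) * p ^ \<nu>)"
    and "\<not> (p - 1) dvd m" and "\<not> (p - 1) dvd n"
    and "N - 1 = 0 \<or>
         multiplicity p (N - 1) \<ge> \<nu> + 1 + multiplicity p (\<Prod>k=0..m. fact (1 + k) :: nat)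
                                 + max (multiplicity p m) (multiplicity p n)"
  shows "qcong p (\<nu> + 1)
           ((1 - of_nat p ^ (m - 1)) * hyp_bernoulli N m / of_nat m)
           ((1 - of_nat p ^ (n - 1)) * hyp_bernoulli N n / of_nat n)"
proof -
  have p3: "p \<ge> 3"
  proof (rule ccontr)
    assume "\<not> p \<ge> 3"
    then have "p = 2" using prime_ge_2_nat[OF assms(1)] by simp
    then show False using assms(9) by simp
  qed
  have dvd: "(p - 1) * p ^ \<nu> dvd (m - n)" using assms(7,8) by (simp add: cong_altdef_nat)
  have Y: "pint p (int \<nu> + 1) (Yk p m - Yk p n)"
    by (rule kummer1[OF assms(1) _ assms(7) dvd assms(9,10)]) (use assms(4) in simp)
  show ?thesis
  proof (cases "N = 1")
    case True
    have "(1 - of_nat p ^ (k - 1)) * hyp_bernoulli N k / of_nat k = Yk p k" for k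
      unfolding True hyp_bernoulli_bN Yk_def Bern_def by simp
    moreover have "qcong p (\<nu> + 1) (Yk p m) (Yk p n)"
      by (rule pint_qcong[OF assms(1)]) (use Y in \<open>simp add: add.commute\<close>)
    ultimately show ?thesis by simp
  next
    case False
    define E where "E = \<nu> + 1 + VV p m + max (multiplicity p m) (multiplicity p n)"
    have ge: "multiplicity p (N - 1) \<ge> E"
      using assms(11) False assms(2) unfolding E_def mult_prod_VV[OF assms(1)] by auto
    have "p ^ E dvd N - 1" by (rule multiplicity_dvd'[OF ge])
    then have dE: "int p ^ E dvd int N - 1" using assms(2)
      by (metis int_dvd_int_iff of_nat_1 of_nat_diff of_nat_power)
    have VE: "VV p m < E" unfolding E_def by simp
    have D: "pint p (int \<nu> + 1) (of_int (1 - int p ^ (k - 1)) * (of_nat (fact k) * ((bN N k - bN 1 k) / of_nat k)))"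
      if k: "k > 0" "k \<le> m" "\<not> (p - 1) dvd k" "multiplicity p k \<le> max (multiplicity p m) (multiplicity p n)" for k
    proof -
      have G: "GG p k = VV p k" unfolding GG_def using k(3) by auto
      have h: "pint p (int E - int (VV p k)) (bN N k - bN 1 k)"
        using perturb[OF assms(1) p3 dE assms(2) VE k(2)] G by simp
      have h2: "pint p (int E - int (VV p k) - int (multiplicity p k)) ((bN N k - bN 1 k) / of_nat k)"
        by (rule pint_divide_nat[OF assms(1) h k(1)])
      have "VV p k \<le> VV p m" using VV_mono[OF k(2)] .
      then have "int \<nu> + 1 \<le> int E - int (VV p k) - int (multiplicity p k)"
        using k(4) unfolding E_def by simp
      then have h3: "pint p (int \<nu> + 1) ((bN N k - bN 1 k) / of_nat k)"
        using pint_mono[OF assms(1) h2] by blast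
      have "pint p (0 + (0 + (int \<nu> + 1))) (of_int (1 - int p ^ (k - 1)) * (of_nat (fact k) * ((bN N k - bN 1 k) / of_nat k)))"
        by (rule pint_mult[OF assms(1) pint_of_int[OF assms(1)] pint_mult[OF assms(1) pint_of_nat[OF assms(1)] h3]])
      then show ?thesis by simp
    qed
    have Dm: "pint p (int \<nu> + 1) (of_int (1 - int p ^ (m - 1)) * (of_nat (fact m) * ((bN N m - bN 1 m) / of_nat m)))"
      by (rule D) (use assms in auto)
    have Dn: "pint p (int \<nu> + 1) (of_int (1 - int p ^ (n - 1)) * (of_nat (fact n) * ((bN N n - bN 1 n) / of_nat n)))"
      by (rule D) (use assms in auto)
    have "pint p (int (\<nu> + 1)) (((1 - of_nat p ^ (m - 1)) * hyp_bernoulli N m / of_nat m)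
           - ((1 - of_nat p ^ (n - 1)) * hyp_bernoulli N n / of_nat n))"
      unfolding Xk_split[OF assms(3)] Xk_split[OF assms(4)]
      using pint_add[OF assms(1) Y pint_diff[OF assms(1) Dm Dn]] by (simp add: algebra_simps)
    then show ?thesis by (rule pint_qcong[OF assms(1)])
  qed
qed


end
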